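(* Let $\mathcal{A},\mathcal{B}$ be test spaces with outcome sets $X,Y$, and let $\omega$ be a probability weight on $\mathcal{A}\times\mathcal{B}$. Then $\omega$ exhibits no influence from $\mathcal{B}$ to $\mathcal{A}$ iff $\omega\in\Pr(\overrightarrow{\mathcal{A}\mathcal{B}})$; $\omega$ exhibits no influence from $\mathcal{A}$ to $\mathcal{B}$ iff $\omega\in\Pr(\overleftarrow{\mathcal{A}\mathcal{B}})$; and $\omega$ is non-signaling iff $\omega\in\Pr(\overrightarrow{\mathcal{A}\mathcal{B}}\cup\overleftarrow{\mathcal{A}\mathcal{B}})$.
   Context: A test space is an irredundant collection of nonempty sets (tests). For a collection $\mathcal{T}$ of subsets of $X\times Y$, $\Pr(\mathcal{T})$ is the set of functions $\omega:X\times Y\to[0,1]$ with $\sum_{(x,y)\in S}\omega(x,y)=1$ for every $S\in\mathcal{T}$. $\mathcal{A}\times\mathcal{B}=\{E\times F:E\in\mathcal{A},F\in\mathcal{B}\}$. The forward product $\overrightarrow{\mathcal{A}\mathcal{B}}$ consists of all sets $\bigcup_{x\in E}\{x\}\times F_x$ with $E\in\mathcal{A}$ and $F:E\to\mathcal{B}$; the backward product $\overleftarrow{\mathcal{A}\mathcal{B}}$ consists of all sets $\bigcup_{y\in F}E_y\times\{y\}$ with $F\in\mathcal{B}$ and $E:F\to\mathcal{A}$. Write $\omega(E,y)=\sum_{x\in E}\omega(x,y)$ and $\omega(x,F)=\sum_{y\in F}\omega(x,y)$. $\omega$ exhibits no influence from $\mathcal{A}$ to $\mathcal{B}$ if $\omega(E,y)=\omega(E',y)$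 for all $E,E'\in\mathcal{A}$, $y\in Y$; no influence from $\mathcal{B}$ to $\mathcal{A}$ if $\omega(x,F)=\omega(x,F')$ for all $F,F'\in\mathcal{B}$, $x\in X$; and is non-signaling if both hold. *)

theory Defs
  imports "HOL-Analysis.Analysis"
begin

definition test_space :: "'a set set \<Rightarrow> bool" where
  "test_space \<A> \<longleftrightarrow> (\<forall>E\<in>\<A>. E \<noteq> {}) \<and> (\<forall>E\<in>\<A>. \<forall>E'\<in>\<A>. E \<subseteq> E' \<longrightarrow> E = E')"

abbreviation outcomes :: "'a set set \<Rightarrow> 'a set" where
  "outcomes \<A> \<equiv> \<Union>\<A>"

text \<open>Pr(T): functions X \<times> Y \<rightarrow> [0,1] summing to 1 over every set in T
  (sums are unordered sums of nonnegative reals, so tests need not be finite).\<close>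
definition Pr :: "'a set \<Rightarrow> 'b set \<Rightarrow> ('a \<times> 'b) set set \<Rightarrow> ('a \<times> 'b \<Rightarrow> real) set" where
  "Pr X Y T = {\<omega>. (\<forall>p\<in>X \<times> Y. 0 \<le> \<omega> p \<and> \<omega> p \<le> 1) \<and> (\<forall>S\<in>T. (\<omega> has_sum 1) S)}"

definition prod_ts :: "'a set set \<Rightarrow> 'b set set \<Rightarrow> ('a \<times> 'b) set set" where
  "prod_ts \<A> \<B> = {E \<times> F | E F. E \<in> \<A> \<and> F \<in> \<B>}"

definition fwd_prod :: "'a set set \<Rightarrow> 'b set set \<Rightarrow> ('a \<times> 'b) set set" where
  "fwd_prod \<A> \<B> = {(\<Union>x\<in>E. {x} \<times> F x) | E F. E \<in> \<A> \<and> (\<forall>x\<in>E. F x \<in> \<B>)}"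

definition bwd_prod :: "'a set set \<Rightarrow> 'b set set \<Rightarrow> ('a \<times> 'b) set set" where
  "bwd_prod \<A> \<B> = {(\<Union>y\<in>F. E y \<times> {y}) | F E. F \<in> \<B> \<and> (\<forall>y\<in>F. E y \<in> \<A>)}"

definition margL :: "('a \<times> 'b \<Rightarrow> real) \<Rightarrow> 'a set \<Rightarrow> 'b \<Rightarrow> real" where
  "margL \<omega> E y = (\<Sum>\<^sub>\<infinity>x\<in>E. \<omega> (x, y))"

definition margR :: "('a \<times> 'b \<Rightarrow> real) \<Rightarrow> 'a \<Rightarrow> 'b set \<Rightarrow> real" where
  "margR \<omega> x F = (\<Sum>\<^sub>\<infinity>y\<in>F. \<omega> (x, y))"

definition no_infl_AB :: "'a set set \<Rightarrow> 'b set set \<Rightarrow> ('a \<times> 'b \<Rightarrow> real) \<Rightarrow> bool" where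
  "no_infl_AB \<A> \<B> \<omega> \<longleftrightarrow> (\<forall>E\<in>\<A>. \<forall>E'\<in>\<A>. \<forall>y\<in>outcomes \<B>. margL \<omega> E y = margL \<omega> E' y)"

definition no_infl_BA :: "'a set set \<Rightarrow> 'b set set \<Rightarrow> ('a \<times> 'b \<Rightarrow> real) \<Rightarrow> bool" where
  "no_infl_BA \<A> \<B> \<omega> \<longleftrightarrow> (\<forall>F\<in>\<B>. \<forall>F'\<in>\<B>. \<forall>x\<in>outcomes \<A>. margR \<omega> x F = margR \<omega> x F')"

definition non_signaling :: "'a set set \<Rightarrow> 'b set set \<Rightarrow> ('a \<times> 'b \<Rightarrow> real) \<Rightarrow> bool" where
  "non_signaling \<A> \<B> \<omega> \<longleftrightarrow> no_infl_AB \<A> \<B> \<omega> \<and> no_infl_BA \<A> \<B> \<omega>"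

end

theory Submission
  imports Defs
begin

lemma row_has_sum:
  fixes \<omega> :: "'a \<times> 'b \<Rightarrow> real"
  assumes "\<omega> summable_on (E \<times> F)" "x \<in> E"
  shows "((\<lambda>y. \<omega> (x, y)) has_sum margR \<omega> x F) F"
proof -
  have "Pair x ` F \<subseteq> E \<times> F" using assms(2) by auto
  hence "\<omega> summable_on (Pair x ` F)" using assms(1) summable_on_subset_banach by blast
  hence "(\<omega> \<circ> Pair x) summable_on F" by (subst (asm) summable_on_reindex) (auto simp: inj_on_def)
  hence "(\<lambda>y. \<omega> (x, y)) summable_on F" by (simp add: o_def)
  thus ?thesis unfolding margR_def by (rule has_sum_infsum)
qed

lemma infsum_row:
  fixes \<omega> :: "'a \<times> 'b \<Rightarrow> real"
  shows "infsum \<omega> ({x} \<times> F) = margR \<omega> x F"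
proof -
  have "{x} \<times> F = Pair x ` F" by auto
  hence "infsum \<omega> ({x} \<times> F) = infsum (\<omega> \<circ> Pair x) F"
    by (simp add: infsum_reindex inj_on_def)
  thus ?thesis by (simp add: margR_def o_def)
qed

lemma part1:
  fixes \<A> :: "'a set set" and \<B> :: "'b set set" and \<omega> :: "'a \<times> 'b \<Rightarrow> real"
  assumes tA: "test_space \<A>" and tB: "test_space \<B>"
    and P: "\<omega> \<in> Pr (outcomes \<A>) (outcomes \<B>) (prod_ts \<A> \<B>)"
  shows "no_infl_BA \<A> \<B> \<omega> \<longleftrightarrow> \<omega> \<in> Pr (outcomes \<A>) (outcomes \<B>) (fwd_prod \<A> \<B>)"
proof -
  have bnd: "\<forall>p\<in>outcomes \<A> \<times> outcomes \<B>. 0 \<le> \<omega> p \<and> \<omega> p \<le> 1" using P by (simp add: Pr_def)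
  have prod1: "(\<omega> has_sum 1) (E \<times> F)" if "E \<in> \<A>" "F \<in> \<B>" for E F
    using P that unfolding Pr_def prod_ts_def by blast
  have summ: "\<omega> summable_on (E \<times> F)" if "E \<in> \<A>" "F \<in> \<B>" for E F
    using prod1[OF that] by (auto simp: summable_on_def)
  show ?thesis
  proof
    assume NI: "no_infl_BA \<A> \<B> \<omega>"
    show "\<omega> \<in> Pr (outcomes \<A>) (outcomes \<B>) (fwd_prod \<A> \<B>)"
      unfolding Pr_def
    proof (intro CollectI conjI ballI)
      fix S assume "S \<in> fwd_prod \<A> \<B>"
      then obtain E G where S: "S = (\<Union>x\<in>E. {x} \<times> G x)" and E: "E \<in> \<A>" and G: "\<forall>x\<in>E. G x \<in> \<B>"
        unfolding fwd_prod_def by blast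
      have "E \<noteq> {}" using tA E by (simp add: test_space_def)
      then obtain x0 where x0: "x0 \<in> E" by blast
      define F0 where "F0 = G x0"
      have F0: "F0 \<in> \<B>" using G x0 F0_def by auto
      have SS: "S = Sigma E G" using S by auto
      have inner: "((\<lambda>y. \<omega> (x, y)) has_sum margR \<omega> x F0) (G x)" if "x \<in> E" for x
      proof -
        have "margR \<omega> x (G x) = margR \<omega> x F0"
          using NI G that F0 E unfolding no_infl_BA_def by blast
        with row_has_sum[OF summ[OF E G[rule_format, OF that]] that] show ?thesis by simp
      qed
      have outer: "((\<lambda>x. margR \<omega> x F0) has_sum 1) E"
        by (rule has_sum_SigmaD[OF prod1[OF E F0]]) (rule row_has_sum[OF summ[OF E F0]])
      have nn: "0 \<le> \<omega> (x, y)" if "x \<in> E" "y \<in> G x" for x y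
        using bnd that E G by blast
      have "\<omega> summable_on Sigma E G"
        by (rule summable_on_SigmaI[OF inner _ nn]) (use outer in \<open>auto simp: summable_on_def\<close>)
      hence "(\<omega> has_sum 1) (Sigma E G)"
        by (rule has_sum_SigmaI[OF inner outer, rotated])
      thus "(\<omega> has_sum 1) S" using SS by simp
    qed (use bnd in auto)
  next
    assume FP: "\<omega> \<in> Pr (outcomes \<A>) (outcomes \<B>) (fwd_prod \<A> \<B>)"
    have fw1: "(\<omega> has_sum 1) (Sigma E G)" if "E \<in> \<A>" "\<forall>x\<in>E. G x \<in> \<B>" for E G
    proof -
      have "Sigma E G = (\<Union>x\<in>E. {x} \<times> G x)" by auto
      hence "Sigma E G \<in> fwd_prod \<A> \<B>" unfolding fwd_prod_def using that by blast
      thus ?thesis using FP unfolding Pr_def by blast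
    qed
    have key: "margR \<omega> x F = margR \<omega> x F'"
      if x: "x \<in> E" and E: "E \<in> \<A>" and F: "F \<in> \<B>" and F': "F' \<in> \<B>" for x E F F'
    proof -
      define R where "R = (E - {x}) \<times> F'"
      have s1: "(\<omega> has_sum 1) (Sigma E (\<lambda>z. if z = x then F else F'))"
        by (rule fw1) (use E F F' in auto)
      have e1: "Sigma E (\<lambda>z. if z = x then F else F') = R \<union> {x} \<times> F"
        using x by (auto simp: R_def split: if_splits)
      have e2: "E \<times> F' = R \<union> {x} \<times> F'" using x by (auto simp: R_def)
      have s2: "(\<omega> has_sum 1) (E \<times> F')" by (rule prod1[OF E F'])
      have a1: "1 = infsum \<omega> R + infsum \<omega> ({x} \<times> F)"
      proof -
        have sm: "\<omega> summable_on (R \<union> {x} \<times> F)" using s1 e1 by (auto simp: summable_on_def)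
        have "1 = infsum \<omega> (R \<union> {x} \<times> F)" using s1 e1 by (simp add: infsumI)
        also have "\<dots> = infsum \<omega> R + infsum \<omega> ({x} \<times> F)"
          by (rule infsum_Un_disjoint) (use sm summable_on_subset_banach in \<open>blast\<close>,
              use sm summable_on_subset_banach in \<open>blast\<close>, auto simp: R_def)
        finally show ?thesis .
      qed
      have a2: "1 = infsum \<omega> R + infsum \<omega> ({x} \<times> F')"
      proof -
        have sm: "\<omega> summable_on (R \<union> {x} \<times> F')" using s2 e2 by (auto simp: summable_on_def)
        have "1 = infsum \<omega> (R \<union> {x} \<times> F')" using s2 e2 by (simp add: infsumI)
        also have "\<dots> = infsum \<omega> R + infsum \<omega> ({x} \<times> F')"
          by (rule infsum_Un_disjoint) (use sm summable_on_subset_banach in \<open>blast\<close>,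
              use sm summable_on_subset_banach in \<open>blast\<close>, auto simp: R_def)
        finally show ?thesis .
      qed
      from a1 a2 show ?thesis by (simp add: infsum_row)
    qed
    show "no_infl_BA \<A> \<B> \<omega>" unfolding no_infl_BA_def
    proof (intro ballI)
      fix F F' x assume F: "F \<in> \<B>" and F': "F' \<in> \<B>" and x: "x \<in> outcomes \<A>"
      from x obtain E where "E \<in> \<A>" "x \<in> E" by blast
      thus "margR \<omega> x F = margR \<omega> x F'" using key F F' by blast
    qed
  qed
qed

lemma swap_hs:
  fixes \<omega> :: "'a \<times> 'b \<Rightarrow> real"
  shows "(\<omega> has_sum c) S \<longleftrightarrow> ((\<omega> \<circ> prod.swap) has_sum c) (prod.swap ` S)"
proof -
  have "inj_on prod.swap S" by (metis inj_on_def swap_swap)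
  hence "((\<omega> \<circ> prod.swap) has_sum c) (prod.swap ` S) \<longleftrightarrow> ((\<omega> \<circ> prod.swap \<circ> prod.swap) has_sum c) S"
    by (rule has_sum_reindex)
  moreover have "\<omega> \<circ> prod.swap \<circ> prod.swap = \<omega>" by (rule ext) simp
  ultimately show ?thesis by simp
qed

lemma swap_Pr:
  fixes \<omega> :: "'a \<times> 'b \<Rightarrow> real"
  shows "\<omega> \<in> Pr X Y T \<longleftrightarrow> (\<omega> \<circ> prod.swap) \<in> Pr Y X ((`) prod.swap ` T)"
proof -
  have b: "(\<forall>p\<in>X \<times> Y. 0 \<le> \<omega> p \<and> \<omega> p \<le> 1) \<longleftrightarrow> (\<forall>p\<in>Y \<times> X. 0 \<le> (\<omega> \<circ> prod.swap) p \<and> (\<omega> \<circ> prod.swap) p \<le> 1)"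
    by auto
  have t: "(\<forall>S\<in>T. (\<omega> has_sum 1) S) \<longleftrightarrow> (\<forall>S\<in>(`) prod.swap ` T. ((\<omega> \<circ> prod.swap) has_sum 1) S)"
    using swap_hs[of \<omega>, where c=1] by simp
  show ?thesis unfolding Pr_def mem_Collect_eq using b t by simp
qed

lemma swap_prod_ts: "prod_ts \<B> \<A> = (`) prod.swap ` prod_ts \<A> \<B>"
proof
  show "prod_ts \<B> \<A> \<subseteq> (`) prod.swap ` prod_ts \<A> \<B>"
  proof
    fix S assume "S \<in> prod_ts \<B> \<A>"
    then obtain F E where "S = F \<times> E" "F \<in> \<B>" "E \<in> \<A>" unfolding prod_ts_def by blast
    moreover have "prod.swap ` (E \<times> F) = F \<times> E" by (rule product_swap)
    ultimately show "S \<in> (`) prod.swap ` prod_ts \<A> \<B>" unfolding prod_ts_def by blast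
  qed
next
  show "(`) prod.swap ` prod_ts \<A> \<B> \<subseteq> prod_ts \<B> \<A>"
  proof
    fix S assume "S \<in> (`) prod.swap ` prod_ts \<A> \<B>"
    then obtain F E where "S = prod.swap ` (E \<times> F)" "F \<in> \<B>" "E \<in> \<A>" unfolding prod_ts_def by blast
    moreover have "prod.swap ` (E \<times> F) = F \<times> E" by (rule product_swap)
    ultimately show "S \<in> prod_ts \<B> \<A>" unfolding prod_ts_def by blast
  qed
qed

lemma swap_fwd: "fwd_prod \<B> \<A> = (`) prod.swap ` bwd_prod \<A> \<B>"
proof -
  have e: "prod.swap ` (\<Union>y\<in>F. E y \<times> {y}) = (\<Union>y\<in>F. {y} \<times> E y)" for F E
    by force
  show ?thesis
  proof
    show "fwd_prod \<B> \<A> \<subseteq> (`) prod.swap ` bwd_prod \<A> \<B>"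
    proof
      fix S assume "S \<in> fwd_prod \<B> \<A>"
      then obtain F E where "S = (\<Union>y\<in>F. {y} \<times> E y)" "F \<in> \<B>" "\<forall>y\<in>F. E y \<in> \<A>"
        unfolding fwd_prod_def by blast
      moreover note e[of E F]
      ultimately show "S \<in> (`) prod.swap ` bwd_prod \<A> \<B>" unfolding bwd_prod_def by blast
    qed
  next
    show "(`) prod.swap ` bwd_prod \<A> \<B> \<subseteq> fwd_prod \<B> \<A>"
    proof
      fix S assume "S \<in> (`) prod.swap ` bwd_prod \<A> \<B>"
      then obtain F E where "S = prod.swap ` (\<Union>y\<in>F. E y \<times> {y})" "F \<in> \<B>" "\<forall>y\<in>F. E y \<in> \<A>"
        unfolding bwd_prod_def by blast
      moreover note e[of E F]
      ultimately show "S \<in> fwd_prod \<B> \<A>" unfolding fwd_prod_def by blast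
    qed
  qed
qed

lemma swap_margL: "margL \<omega> E y = margR (\<omega> \<circ> prod.swap) y E"
  by (simp add: margL_def margR_def)

lemma swap_noinfl: "no_infl_AB \<A> \<B> \<omega> \<longleftrightarrow> no_infl_BA \<B> \<A> (\<omega> \<circ> prod.swap)"
  unfolding no_infl_AB_def no_infl_BA_def swap_margL by blast

lemma Pr_Un: "Pr X Y (T1 \<union> T2) = Pr X Y T1 \<inter> Pr X Y T2"
  unfolding Pr_def by auto

theorem lemma3p3:
  fixes \<A> :: "'a set set" and \<B> :: "'b set set" and \<omega> :: "'a \<times> 'b \<Rightarrow> real"
  assumes "test_space \<A>" and "test_space \<B>"
    and "\<omega> \<in> Pr (outcomes \<A>) (outcomes \<B>) (prod_ts \<A> \<B>)"
  shows "(no_infl_BA \<A> \<B> \<omega> \<longleftrightarrow> \<omega> \<in> Pr (outcomes \<A>) (outcomes \<B>) (fwd_prod \<A> \<B>))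
       \<and> (no_infl_AB \<A> \<B> \<omega> \<longleftrightarrow> \<omega> \<in> Pr (outcomes \<A>) (outcomes \<B>) (bwd_prod \<A> \<B>))
       \<and> (non_signaling \<A> \<B> \<omega> \<longleftrightarrow>
            \<omega> \<in> Pr (outcomes \<A>) (outcomes \<B>) (fwd_prod \<A> \<B> \<union> bwd_prod \<A> \<B>))"
proof -
  have p1: "no_infl_BA \<A> \<B> \<omega> \<longleftrightarrow> \<omega> \<in> Pr (outcomes \<A>) (outcomes \<B>) (fwd_prod \<A> \<B>)"
    using part1[OF assms] .
  have P': "(\<omega> \<circ> prod.swap) \<in> Pr (outcomes \<B>) (outcomes \<A>) (prod_ts \<B> \<A>)"
    using assms(3) swap_Pr swap_prod_ts by metis
  have p2: "no_infl_AB \<A> \<B> \<omega> \<longleftrightarrow> \<omega> \<in> Pr (outcomes \<A>) (outcomes \<B>) (bwd_prod \<A> \<B>)"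
    using part1[OF assms(2,1) P'] swap_noinfl swap_Pr swap_fwd by metis
  show ?thesis using p1 p2 unfolding non_signaling_def Pr_Un by blast
qed

end
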